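(* There is an absolute constant $\epsilon_0\in(0,\frac14]$ such that for all sufficiently large even $d$ and every $i\in[\frac d2]$, the function $f_i:\{0,1\}^d\to\{0,1\}$ defined by $f_i(x)=1$ if $|x|>\frac d2+\sqrt d$, $f_i(x)=0$ if $|x|<\frac d2-\sqrt d$, and $f_i(x)=x_i\oplus x_{i+d/2}$ otherwise, is $\epsilon_0$-far from unate.
   Context: $|x|$ is the number of coordinates of $x\in\{0,1\}^d$ equal to $1$; $\oplus$ is XOR. A function $f:\{0,1\}^d\to\mathbb{R}$ is unate if each dimension $i\in[d]$ can be assigned a direction up or down such that: if up, $f(x)\le f(x+e_i)$ for all $x$ with $x_i=0$ (here $x+e_i$ is $x$ with the $i$-th bit set to 1); if down, $f(x)\ge f(x+e_i)$ for all such $x$. The distance between two functions is the fraction of points where they differ; $f$ is $\epsilon$-far from unate if its distance to every unate function is at least $\epsilon$. *)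

theory Defs
  imports Complex_Main
begin

text \<open>Points of the hypercube {0,1}^d are represented as boolean functions on nat
  that vanish outside coordinates 0..d-1 (coordinates are 0-based).\<close>

definition cube :: "nat \<Rightarrow> (nat \<Rightarrow> bool) set" where
  "cube d = {x. \<forall>j\<ge>d. \<not> x j}"

definition weight :: "nat \<Rightarrow> (nat \<Rightarrow> bool) \<Rightarrow> nat" where
  "weight d x = card {j. j < d \<and> x j}"

definition unate :: "nat \<Rightarrow> ((nat \<Rightarrow> bool) \<Rightarrow> real) \<Rightarrow> bool" where
  "unate d f \<longleftrightarrow> (\<exists>up :: nat \<Rightarrow> bool. \<forall>i<d. \<forall>x\<in>cube d. \<not> x i \<longrightarrow>
      (if up i then f x \<le> f (x(i := True)) else f x \<ge> f (x(i := True))))"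

definition dist_fun :: "nat \<Rightarrow> ((nat \<Rightarrow> bool) \<Rightarrow> real) \<Rightarrow> ((nat \<Rightarrow> bool) \<Rightarrow> real) \<Rightarrow> real" where
  "dist_fun d f g = real (card {x\<in>cube d. f x \<noteq> g x}) / 2 ^ d"

definition far_from_unate :: "real \<Rightarrow> nat \<Rightarrow> ((nat \<Rightarrow> bool) \<Rightarrow> real) \<Rightarrow> bool" where
  "far_from_unate \<epsilon> d f \<longleftrightarrow> (\<forall>g. unate d g \<longrightarrow> dist_fun d f g \<ge> \<epsilon>)"

text \<open>The function f_i; i is 0-based here (paper's i in [d/2] corresponds to i+1).\<close>
definition f_fun :: "nat \<Rightarrow> nat \<Rightarrow> (nat \<Rightarrow> bool) \<Rightarrow> real" where
  "f_fun d i x =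
    (if real (weight d x) > real d / 2 + sqrt (real d) then 1
     else if real (weight d x) < real d / 2 - sqrt (real d) then 0
     else (if x i \<noteq> x (i + d div 2) then 1 else 0))"

end

theory Submission imports Defs begin

lemma cube_0: "cube 0 = {\<lambda>_. False}" by (auto simp: cube_def)

lemma cube_Suc: "cube (Suc d) = cube d \<union> (\<lambda>x. x(d:=True)) ` cube d"
proof
  show "cube (Suc d) \<subseteq> cube d \<union> (\<lambda>x. x(d:=True)) ` cube d"
  proof
    fix x assume x: "x \<in> cube (Suc d)"
    show "x \<in> cube d \<union> (\<lambda>x. x(d:=True)) ` cube d"
    proof (cases "x d")
      case True
      have "x(d:=False) \<in> cube d" using x by (auto simp: cube_def)
      moreover have "x = (x(d:=False))(d:=True)" using True by (auto simp: fun_eq_iff)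
      ultimately show ?thesis by blast
    next
      case False
      then have "x \<in> cube d" using x unfolding cube_def
      proof (intro CollectI allI impI)
        fix j assume "d \<le> j"
        then have "j = d \<or> Suc d \<le> j" by arith
        then show "\<not> x j" using x False by (auto simp: cube_def)
      qed
      then show ?thesis by blast
    qed
  qed
  show "cube d \<union> (\<lambda>x. x(d:=True)) ` cube d \<subseteq> cube (Suc d)"
    by (auto simp: cube_def)
qed

lemma upd_inj: "inj_on (\<lambda>x. x(d:=True)) (cube d)"
  unfolding inj_on_def cube_def by (auto simp: fun_eq_iff)

lemma upd_disj: "cube d \<inter> (\<lambda>x. x(d:=True)) ` cube d = {}"
  by (auto simp: cube_def)

lemma finite_card_cube: "finite (cube d) \<and> card (cube d) = 2^d"
proof (induction d)
  case 0 then show ?case by (simp add: cube_0)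
next
  case (Suc d)
  then show ?case unfolding cube_Suc
    by (simp add: card_Un_disjoint upd_disj card_image upd_inj)
qed

lemma weight_Suc1: "x \<in> cube d \<Longrightarrow> weight (Suc d) x = weight d x"
  unfolding weight_def cube_def
  by (rule arg_cong[where f=card]) (auto simp: less_Suc_eq)

lemma weight_Suc2: "x \<in> cube d \<Longrightarrow> weight (Suc d) (x(d:=True)) = Suc (weight d x)"
proof -
  assume x: "x \<in> cube d"
  have "{j. j < Suc d \<and> (x(d:=True)) j} = insert d {j. j < d \<and> x j}"
    by (auto simp: less_Suc_eq)
  moreover have "finite {j. j < d \<and> x j}" by simp
  ultimately show ?thesis unfolding weight_def by simp
qed

lemma var: "(\<Sum>x\<in>cube d. (2*real(weight d x) - real d)^2) = real d * 2^d"
proof (induction d)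
  case 0 then show ?case by (simp add: cube_0 weight_def)
next
  case (Suc d)
  have fin: "finite (cube d)" using finite_card_cube by blast
  have "(\<Sum>x\<in>cube (Suc d). (2*real(weight (Suc d) x) - real (Suc d))^2)
    = (\<Sum>x\<in>cube d. (2*real(weight (Suc d) x) - real (Suc d))^2)
      + (\<Sum>x\<in>(\<lambda>x. x(d:=True)) ` cube d. (2*real(weight (Suc d) x) - real (Suc d))^2)"
    unfolding cube_Suc by (rule sum.union_disjoint) (use fin upd_disj in auto)
  also have "(\<Sum>x\<in>(\<lambda>x. x(d:=True)) ` cube d. (2*real(weight (Suc d) x) - real (Suc d))^2)
     = (\<Sum>x\<in>cube d. (2*real(weight (Suc d) (x(d:=True))) - real (Suc d))^2)"
    by (subst sum.reindex) (use upd_inj in auto)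
  also have "(\<Sum>x\<in>cube d. (2*real(weight (Suc d) x) - real (Suc d))^2)
     = (\<Sum>x\<in>cube d. (2*real(weight d x) - real d - 1)^2)"
    by (rule sum.cong) (simp_all add: weight_Suc1 diff_diff_eq add.commute)
  also have "(\<Sum>x\<in>cube d. (2*real(weight (Suc d) (x(d:=True))) - real (Suc d))^2)
     = (\<Sum>x\<in>cube d. (2*real(weight d x) - real d + 1)^2)"
    by (rule sum.cong) (simp_all add: weight_Suc2 power2_eq_square, argo)
  also have "(\<Sum>x\<in>cube d. (2*real(weight d x) - real d - 1)^2) + (\<Sum>x\<in>cube d. (2*real(weight d x) - real d + 1)^2)
     = (\<Sum>x\<in>cube d. 2 * (2*real(weight d x) - real d)^2 + 2)"
    by (simp add: sum.distrib[symmetric] power2_eq_square algebra_simps)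
  also have "\<dots> = 2 * (\<Sum>x\<in>cube d. (2*real(weight d x) - real d)^2) + 2 * real (card (cube d))"
    by (simp add: sum.distrib sum_distrib_left)
  also have "\<dots> = real (Suc d) * 2 ^ Suc d" using Suc finite_card_cube[of d] by (simp add: algebra_simps)
  finally show ?case .
qed


lemma weight_upd_le: "k < d \<Longrightarrow> weight d (y(k:=a)) \<le> weight d y + 1"
proof -
  assume "k < d"
  have "{j. j < d \<and> (y(k:=a)) j} \<subseteq> insert k {j. j < d \<and> y j}" by auto
  then have "weight d (y(k:=a)) \<le> card (insert k {j. j < d \<and> y j})"
    unfolding weight_def by (intro card_mono) auto
  also have "\<dots> \<le> weight d y + 1" unfolding weight_def
    by (simp add: card_insert_if)
  finally show ?thesis .
qed

lemma weight_upd_ge: "k < d \<Longrightarrow> weight d y \<le> weight d (y(k:=a)) + 1"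
proof -
  assume "k < d"
  have "y = (y(k:=a))(k := y k)" by auto
  then have "weight d y = weight d ((y(k:=a))(k := y k))" by simp
  also have "\<dots> \<le> weight d (y(k:=a)) + 1" using \<open>k < d\<close> by (rule weight_upd_le)
  finally show ?thesis .
qed

lemma cheb:
  assumes t: "t > 0"
  shows "real (card {y\<in>cube d. \<bar>2*real(weight d y) - real d\<bar> > t}) * t^2 \<le> real d * 2^d"
proof -
  let ?T = "{y\<in>cube d. \<bar>2*real(weight d y) - real d\<bar> > t}"
  have fin: "finite (cube d)" using finite_card_cube by blast
  have "real (card ?T) * t^2 = (\<Sum>y\<in>?T. t^2)" by simp
  also have "\<dots> \<le> (\<Sum>y\<in>?T. (2*real(weight d y) - real d)^2)"
  proof (rule sum_mono)
    fix y assume "y \<in> ?T"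
    then have "t \<le> \<bar>2*real(weight d y) - real d\<bar>" by auto
    then have "t^2 \<le> \<bar>2*real(weight d y) - real d\<bar>^2" using t by (intro power_mono) auto
    then show "t^2 \<le> (2*real(weight d y) - real d)^2" by simp
  qed
  also have "\<dots> \<le> (\<Sum>y\<in>cube d. (2*real(weight d y) - real d)^2)"
    by (rule sum_mono2) (use fin in auto)
  also have "\<dots> = real d * 2^d" by (rule var)
  finally show ?thesis .
qed

theorem claim12:
  shows "\<exists>\<epsilon>0::real. 0 < \<epsilon>0 \<and> \<epsilon>0 \<le> 1/4 \<and>
    (\<exists>D. \<forall>d\<ge>D. even d \<longrightarrow> (\<forall>i < d div 2. far_from_unate \<epsilon>0 d (f_fun d i)))"
proof (intro exI conjI allI impI)
  show "(0::real) < 1/10" "(1/10::real) \<le> 1/4" by auto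
  fix d i :: nat
  assume d100: "100 \<le> d" and ev: "even d" and id: "i < d div 2"
  show "far_from_unate (1/10) d (f_fun d i)"
    unfolding far_from_unate_def
  proof (intro allI impI)
    fix g assume un: "unate d g"
    define j where "j = i + d div 2"
    have ij: "i \<noteq> j" "i < d" "j < d" using id ev d100 unfolding j_def by auto
    define s where "s = sqrt (real d)"
    have s10: "s \<ge> 10"
    proof -
      have "sqrt 100 \<le> sqrt (real d)" using d100 by (subst real_sqrt_le_iff) simp
      moreover have "sqrt (100::real) = 10" by (simp add: real_sqrt_eq_iff[symmetric] power2_eq_square) 
      ultimately show ?thesis unfolding s_def by simp
    qed
    have ss: "s^2 = real d" unfolding s_def by simp
    have fin: "finite (cube d)" and cc: "card (cube d) = 2^d" using finite_card_cube by blast+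
    define S where "S = {x\<in>cube d. f_fun d i x \<noteq> g x}"
    define G where "G = {y\<in>cube d. \<bar>2*real(weight d y) - real d\<bar> \<le> 2*s - 4}"
    define T where "T = {y\<in>cube d. \<bar>2*real(weight d y) - real d\<bar> > 2*s - 4}"
    define sq where "sq q = (\<lambda>(a,b). q(i:=a, j:=b)) ` (UNIV :: (bool \<times> bool) set)" for q :: "nat \<Rightarrow> bool"
    have finS: "finite S" unfolding S_def using fin by auto
    have GT: "cube d = G \<union> T" "G \<inter> T = {}" unfolding G_def T_def by auto
    have finG: "finite G" "finite T" using fin GT(1) by (metis finite_Un)+
    have "card (cube d) = card G + card T" using GT finG by (simp add: card_Un_disjoint)
    then have cGT: "real (card G) + real (card T) = 2^d" using cc by (metis of_nat_add of_nat_numeral of_nat_power)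
    have "real (card T) * (2*s-4)^2 \<le> real d * 2^d" unfolding T_def using s10 by (intro cheb) auto
    moreover have "(2*s-4)^2 \<ge> 2.56 * real d"
    proof -
      have "2*s - 4 \<ge> 1.6 * s" using s10 by auto
      then have "(2*s-4)^2 \<ge> (1.6*s)^2" using s10 by (intro power_mono) auto
      moreover have "(1.6*s)^2 = 2.56 * s^2" by (simp add: power2_eq_square)
      ultimately show ?thesis using ss by simp
    qed
    ultimately have "real (card T) * (2.56 * real d) \<le> real d * 2^d"
      by (meson mult_left_mono of_nat_0_le_iff order_trans)
    then have "real (card T) * 2.56 \<le> 2^d" using d100 by (simp add: mult.commute mult.left_commute)
    then have cG: "real (card G) \<ge> 0.6 * 2^d" using cGT by auto
    have key: "\<exists>q\<in>S. y \<in> sq q" if yG: "y \<in> G" for y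
    proof -
      define p where "p a b = y(i:=a, j:=b)" for a b
      have yc: "y \<in> cube d" and yw: "\<bar>2*real(weight d y) - real d\<bar> \<le> 2*s - 4" using yG unfolding G_def by auto
      have pc: "p a b \<in> cube d" for a b using yc ij unfolding p_def cube_def by auto
      have pw: "real (weight d (p a b)) \<le> real (weight d y) + 2 \<and> real (weight d y) \<le> real (weight d (p a b)) + 2" for a b
      proof -
        have "weight d (p a b) \<le> weight d (y(i:=a)) + 1" unfolding p_def using ij by (intro weight_upd_le)
        moreover have "weight d (y(i:=a)) \<le> weight d y + 1" using ij by (intro weight_upd_le)
        moreover have "weight d (y(i:=a)) \<le> weight d (p a b) + 1" unfolding p_def using ij by (intro weight_upd_ge)
        moreover have "weight d y \<le> weight d (y(i:=a)) + 1" using ij by (intro weight_upd_ge)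
        ultimately show ?thesis by linarith
      qed
      have fp: "f_fun d i (p a b) = (if a \<noteq> b then 1 else 0)" for a b
      proof -
        have "\<not> real (weight d (p a b)) > real d / 2 + sqrt (real d)"
             "\<not> real (weight d (p a b)) < real d / 2 - sqrt (real d)"
          using pw[of a b] yw unfolding s_def by auto
        moreover have "p a b i = a" "p a b (i + d div 2) = b" using ij unfolding p_def j_def by auto
        ultimately show ?thesis unfolding f_fun_def by simp
      qed
      have "\<exists>a b. f_fun d i (p a b) \<noteq> g (p a b)"
      proof (rule ccontr)
        assume "\<not> ?thesis"
        then have gp: "g (p a b) = (if a \<noteq> b then 1 else 0)" for a b using fp by metis
        obtain up where upd: "\<forall>k<d. \<forall>x\<in>cube d. \<not> x k \<longrightarrow>
            (if up k then g x \<le> g (x(k := True)) else g x \<ge> g (x(k := True)))"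
          using un unfolding unate_def by blast
        have e1: "(p False b)(i := True) = p True b" for b unfolding p_def using ij by (auto simp: fun_eq_iff)
        have e2: "\<not> p False b i" for b unfolding p_def using ij by auto
        have A: "if up i then g (p False b) \<le> g (p True b) else g (p False b) \<ge> g (p True b)" for b
          using upd ij(2) pc[of False b] e2[of b] e1[of b] by metis
        show False
        proof (cases "up i")
          case True then show ?thesis using A[of True] gp by (simp split: if_splits)
        next
          case False then show ?thesis using A[of False] gp by (simp split: if_splits)
        qed
      qed
      then obtain a b where ab: "f_fun d i (p a b) \<noteq> g (p a b)" by blast
      then have "p a b \<in> S" unfolding S_def using pc by auto
      moreover have "y \<in> sq (p a b)"
      proof -
        have "y = (p a b)(i := y i, j := y j)" unfolding p_def by (auto simp: fun_eq_iff)
        then show ?thesis unfolding sq_def by (intro image_eqI[where x="(y i, y j)"]) auto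
      qed
      ultimately show ?thesis by blast
    qed
    have "G \<subseteq> (\<Union>q\<in>S. sq q)" using key by blast
    then have "card G \<le> card (\<Union>q\<in>S. sq q)" using finS unfolding sq_def by (intro card_mono) auto
    also have "\<dots> \<le> (\<Sum>q\<in>S. card (sq q))" by (rule card_UN_le) (rule finS)
    also have "\<dots> \<le> (\<Sum>q\<in>S. 4)"
    proof (rule sum_mono)
      fix q
      have "card (sq q) \<le> card (UNIV :: (bool \<times> bool) set)" unfolding sq_def by (rule card_image_le) simp
      also have "\<dots> = 4" by (simp add: card_UNIV_bool UNIV_Times_UNIV[symmetric] card_cartesian_product del: UNIV_Times_UNIV)
      finally show "card (sq q) \<le> 4" .
    qed
    also have "\<dots> = 4 * card S" by simp
    finally have "real (card G) \<le> 4 * real (card S)" by linarith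
    then have "0.15 * 2^d \<le> real (card S)" using cG by simp
    then show "1/10 \<le> dist_fun d (f_fun d i) g"
      unfolding dist_fun_def S_def[symmetric] by (simp add: field_simps)
  qed
qed

end
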